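(* Let $A$ be a set and $\phi$ a linear form on the span of nonempty words over $A$. Extend $\phi$ to a linear form on $H_{\mathcal S}(A)$ by setting $\phi(T\otimes w)=\phi(w)$ if $T$ is a corolla (a tree whose only internal vertex is the root), $\phi(T\otimes w)=0$ for the other decorated trees, and $\phi=0$ on $1$ and on products of two or more decorated trees. Let $\Phi$ be the character (unital algebra morphism $H_{\mathcal S}(A)\to\mathbb{C}$) that agrees with $\phi$ on decorated trees. Let $\kappa$ be the linear form on $H_{\mathcal S}(A)$ vanishing on $1$ and on products of two or more decorated trees, and given on decorated trees by $$\kappa(T\otimes a_1\cdots a_n)=\begin{cases}(-1)^{i(T)-1}\displaystyle\prod_{v\text{ internal vertex of }T}\phi\Big(\prod_{v\measuredangle i}a_i\Big)&\text{if }T\in\mathrm{PST}_n,\\ 0&\text{otherwise.}\end{cases}$$ Then $\Phi=\epsilon+\kappa\prec\Phi$.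
   Context: A reduced plane tree is a rooted plane tree in which every internal node has at least two children; its weight is its number of leaves minus 1, and $i(T)$ is its number of internal vertices. A tree is prime if it has at least two leaves and the rightmost child of its root is a leaf; $\mathrm{PST}_n$ is the set of prime trees of weight $n$. For $T$ with leaves $\ell_1,\dots,\ell_{n+1}$ from left to right, $v\measuredangle i$ means that the internal vertex $v$ is the lowest common ancestor of $\ell_i$ and $\ell_{i+1}$ ($v$ has a clear view to the $i$th sector); the inner product is taken in increasing order of $i$. $H_{\mathcal S}(A)$ is the algebra with basis finite products (concatenations) of $A$-decorated trees $T\otimes a_1\cdots a_n$ (a tree of weight $n\ge1$ with sectors labeled left to right by $a_1,\dots,a_n\in A$), unit $1$ the empty product. An admissible cut of $T$ is a (possibly empty) set $c$ of internal vertices with at most one vertex on each root-to-leaf path; $P^c(T)$ is the left-to-right product of the subtrees rooted at vertices of $c$, each decorated by the letters of the sectors seen by its vertices, and $R^c(T)$ is $T$ with these subtrees replaced by leaves, decorated by the letters of the sectors seen by its remaining internal vertices. $\Delta(T\otimes w)=\sum_cR^c(T)\otimes P^c(T)$, extended multiplicatively; $\Delta^+_{\prec}(T\otimes w)$ is this sum restricted to cuts for which the rightmost leaf of $T$ remains in $R^c(T)$, and $\Delta^+_{\prec}(x_1\cdots x_s)=\Delta^+_{\prec}(x_1)\Delta(x_2\cdots x_s)$. For linear forms $f,g$ on $H_{\mathcal S}(A)$, $(f\prec g)(1)=0$ and $(f\prec g)(x)=m\circ(f\otimes g)\circ\Delta^+_{\prec}(x)$ for $x$ in the augmentation ideal,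 $m$ being multiplication in $\mathbb{C}$. $\epsilon$ is the counit: $\epsilon(1)=1$ and $\epsilon=0$ on the augmentation ideal. *)

theory Defs
  imports Complex_Main "HOL-Library.Sublist" "HOL-Library.List_Lexorder"
begin

datatype ptree = Leaf | Node "ptree list"

type_synonym path = "nat list"

fun reduced :: "ptree \<Rightarrow> bool" where
  "reduced Leaf = True"
| "reduced (Node ts) = (length ts \<ge> 2 \<and> (\<forall>s\<in>set ts. reduced s))"

fun sub :: "ptree \<Rightarrow> path \<Rightarrow> ptree option" where
  "sub t [] = Some t"
| "sub Leaf (k # p) = None"
| "sub (Node ts) (k # p) = (if k < length ts then sub (ts ! k) p else None)"

fun leafpaths :: "ptree \<Rightarrow> path list"
and leafpathss :: "nat \<Rightarrow> ptree list \<Rightarrow> path list" where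
  "leafpaths Leaf = [[]]"
| "leafpaths (Node ts) = leafpathss 0 ts"
| "leafpathss k [] = []"
| "leafpathss k (s # ss) = map ((#) k) (leafpaths s) @ leafpathss (Suc k) ss"

definition nleaves :: "ptree \<Rightarrow> nat" where
  "nleaves t = length (leafpaths t)"

definition weight :: "ptree \<Rightarrow> nat" where
  "weight t = nleaves t - 1"

definition internal :: "ptree \<Rightarrow> path set" where
  "internal t = {p. \<exists>ts. sub t p = Some (Node ts)}"

definition ninternal :: "ptree \<Rightarrow> nat" where
  "ninternal t = card (internal t)"

definition corolla :: "ptree \<Rightarrow> bool" where
  "corolla t \<longleftrightarrow> internal t = {[]}"

definition prime_tree :: "ptree \<Rightarrow> bool" where
  "prime_tree t \<longleftrightarrow> nleaves t \<ge> 2 \<and>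
     (case t of Leaf \<Rightarrow> False | Node ts \<Rightarrow> ts \<noteq> [] \<and> last ts = Leaf)"

definition PST :: "nat \<Rightarrow> ptree set" where
  "PST n = {t. reduced t \<and> prime_tree t \<and> weight t = n}"

(* v sees sector j (0-based: the sector between the leaves number j and j+1
   counted from 0, i.e. the paper's sector j+1): v is the lowest common ancestor *)
definition sees :: "ptree \<Rightarrow> path \<Rightarrow> nat \<Rightarrow> bool" where
  "sees t v j \<longleftrightarrow> v \<in> internal t \<and> Suc j < nleaves t \<and>
     prefix v (leafpaths t ! j) \<and> prefix v (leafpaths t ! Suc j) \<and>
     (\<forall>u. prefix u (leafpaths t ! j) \<and> prefix u (leafpaths t ! Suc j) \<longrightarrow> prefix u v)"

type_synonym 'a dtree = "ptree \<times> 'a list"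

definition dtree_ok :: "'a set \<Rightarrow> 'a dtree \<Rightarrow> bool" where
  "dtree_ok A x \<longleftrightarrow> reduced (fst x) \<and> weight (fst x) \<ge> 1 \<and>
     length (snd x) = weight (fst x) \<and> set (snd x) \<subseteq> A"

(* basis elements of H_S(A): finite products (lists) of decorated trees; [] is the unit *)
definition basis_ok :: "'a set \<Rightarrow> 'a dtree list \<Rightarrow> bool" where
  "basis_ok A xs \<longleftrightarrow> (\<forall>x\<in>set xs. dtree_ok A x)"

definition seen_word :: "ptree \<Rightarrow> 'a list \<Rightarrow> path set \<Rightarrow> 'a list" where
  "seen_word t w V = [w ! j. j \<leftarrow> [0..<length w], \<exists>v\<in>V. sees t v j]"

definition admissible_cuts :: "ptree \<Rightarrow> path set set" where
  "admissible_cuts t = {c. c \<subseteq> internal t \<and>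
     (\<forall>l\<in>set (leafpaths t). card {v\<in>c. prefix v l} \<le> 1)}"

fun rcut :: "path set \<Rightarrow> ptree \<Rightarrow> ptree"
and rcuts :: "nat \<Rightarrow> path set \<Rightarrow> ptree list \<Rightarrow> ptree list" where
  "rcut c Leaf = Leaf"
| "rcut c (Node ts) = (if [] \<in> c then Leaf else Node (rcuts 0 c ts))"
| "rcuts k c [] = []"
| "rcuts k c (s # ss) = rcut {p. k # p \<in> c} s # rcuts (Suc k) c ss"

definition Rc :: "path set \<Rightarrow> 'a dtree \<Rightarrow> 'a dtree" where
  "Rc c x = (rcut c (fst x),
             seen_word (fst x) (snd x) {u \<in> internal (fst x). \<not> (\<exists>v\<in>c. prefix v u)})"

(* P^c(T): left-to-right (lexicographic order of paths) product of the cut subtrees *)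
definition Pc :: "path set \<Rightarrow> 'a dtree \<Rightarrow> 'a dtree list" where
  "Pc c x = map (\<lambda>v. (the (sub (fst x) v),
                       seen_word (fst x) (snd x) {u \<in> internal (fst x). prefix v u}))
               (sorted_list_of_set c)"

(* a tree reduced to a single leaf (weight 0) is identified with the unit 1 *)
definition norm :: "'a dtree list \<Rightarrow> 'a dtree list" where
  "norm xs = filter (\<lambda>x. fst x \<noteq> Leaf) xs"

definition admissible_cuts_plus :: "ptree \<Rightarrow> path set set" where
  "admissible_cuts_plus t = {c \<in> admissible_cuts t.
      \<not> (\<exists>v\<in>c. prefix v (last (leafpaths t)))}"

(* (f \<prec> g)(x) = m (f \<otimes> g) \<Delta>^+_\<prec>(x), with
   \<Delta>^+_\<prec>(x_1...x_s) = \<Delta>^+_\<prec>(x_1) \<Delta>(x_2...x_s), (f \<prec> g)(1) = 0 *)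
definition prec :: "('a dtree list \<Rightarrow> complex) \<Rightarrow> ('a dtree list \<Rightarrow> complex)
                     \<Rightarrow> 'a dtree list \<Rightarrow> complex" where
  "prec f g xs = (case xs of [] \<Rightarrow> 0
     | x # ys \<Rightarrow>
        (\<Sum>c\<in>admissible_cuts_plus (fst x).
          \<Sum>cs\<in>listset (map (\<lambda>y. admissible_cuts (fst y)) ys).
            f (norm (Rc c x # map2 Rc cs ys)) * g (Pc c x @ concat (map2 Pc cs ys))))"

definition eps :: "'a dtree list \<Rightarrow> complex" where
  "eps xs = (if xs = [] then 1 else 0)"

definition phi_ext :: "('a list \<Rightarrow> complex) \<Rightarrow> 'a dtree \<Rightarrow> complex" where
  "phi_ext \<phi> x = (if corolla (fst x) then \<phi> (snd x) else 0)"

definition kappa :: "('a list \<Rightarrow> complex) \<Rightarrow> 'a dtree list \<Rightarrow> complex" where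
  "kappa \<phi> xs = (case xs of
      [x] \<Rightarrow> (if fst x \<in> PST (length (snd x))
              then (-1) ^ (ninternal (fst x) - 1) *
                   (\<Prod>v\<in>internal (fst x). \<phi> (seen_word (fst x) (snd x) {v}))
              else 0)
    | _ \<Rightarrow> 0)"

end

theory Submission
  imports Defs
begin


fun svl :: "ptree \<Rightarrow> path list" and svls :: "nat \<Rightarrow> ptree list \<Rightarrow> path list" where
  "svl Leaf = []"
| "svl (Node ts) = svls 0 ts"
| "svls k [] = []"
| "svls k [s] = map ((#) k) (svl s)"
| "svls k (s # s' # ss) = map ((#) k) (svl s) @ [] # svls (Suc k) (s' # ss)"

definition adj :: "'a list \<Rightarrow> ('a \<times> 'a) list" where "adj xs = zip xs (tl xs)"

lemma adj_append: "xs \<noteq> [] \<Longrightarrow> ys \<noteq> [] \<Longrightarrow> adj (xs @ ys) = adj xs @ (last xs, hd ys) # adj ys"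
  by (induction xs rule: induct_list012) (auto simp: adj_def neq_Nil_conv)

lemma adj_map: "adj (map f xs) = map (\<lambda>(a,b). (f a, f b)) (adj xs)"
  by (induction xs rule: induct_list012) (auto simp: adj_def)

lemma length_adj: "length (adj xs) = length xs - 1"
  by (simp add: adj_def)

definition Rel :: "path \<times> path \<Rightarrow> path \<Rightarrow> bool" where
  "Rel p s \<longleftrightarrow> (\<forall>v. (prefix v (fst p) \<and> prefix v (snd p)) \<longleftrightarrow> prefix v s)"

lemma Rel_Cons: "Rel (a,b) s \<Longrightarrow> Rel (k # a, k # b) (k # s)"
  unfolding Rel_def
  apply (intro allI)
  subgoal for v by (cases v) auto
  done

lemma Rel_mid: "Rel (k # a, Suc k # b) []"
  unfolding Rel_def
  apply (intro allI)
  subgoal for v by (cases v) auto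
  done

lemma main_lp:
  "reduced t \<Longrightarrow> leafpaths t \<noteq> [] \<and> list_all2 Rel (adj (leafpaths t)) (svl t)"
proof (induction t)
  case Leaf
  then show ?case by (simp add: adj_def)
next
  case (Node ts)
  have "\<And>k. \<forall>s\<in>set ts. reduced s \<Longrightarrow> set ts \<subseteq> set ts' \<Longrightarrow> ts \<noteq> [] \<Longrightarrow>
     leafpathss k ts \<noteq> [] \<and> hd (hd (leafpathss k ts)) = k \<and> hd (leafpathss k ts) \<noteq> [] \<and>
     list_all2 Rel (adj (leafpathss k ts)) (svls k ts)" if "ts' = ts" for ts'
  proof (induction ts rule: induct_list012)
    case 1
    then show ?case by simp
  next
    case (2 x)
    then have "leafpaths x \<noteq> [] \<and> list_all2 Rel (adj (leafpaths x)) (svl x)"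
      using Node.IH that by auto
    then show ?case
      by (auto simp: adj_map list_all2_map1 list_all2_map2 hd_map intro!: Rel_Cons
               elim!: list_all2_mono)
  next
    case (3 x y zs)
    then have IHx: "leafpaths x \<noteq> [] \<and> list_all2 Rel (adj (leafpaths x)) (svl x)"
      using Node.IH that by auto
    have IHr: "leafpathss (Suc k) (y#zs) \<noteq> [] \<and> hd (hd (leafpathss (Suc k) (y#zs))) = Suc k \<and> hd (leafpathss (Suc k) (y#zs)) \<noteq> [] \<and>
     list_all2 Rel (adj (leafpathss (Suc k) (y#zs))) (svls (Suc k) (y#zs))"
      using 3 by auto
    obtain b where b: "hd (leafpathss (Suc k) (y#zs)) = Suc k # b"
      using IHr by (cases "hd (leafpathss (Suc k) (y#zs))") auto
    have lm: "last (map ((#) k) (leafpaths x)) = k # last (leafpaths x)"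
      using IHx by (simp add: last_map)
    have "list_all2 Rel (adj (map ((#) k) (leafpaths x))) (map ((#) k) (svl x))"
      using IHx by (auto simp: adj_map list_all2_map1 list_all2_map2 intro!: Rel_Cons
               elim!: list_all2_mono)
    moreover have eq: "leafpathss k (x#y#zs) = map ((#) k) (leafpaths x) @ leafpathss (Suc k) (y#zs)" by simp
    moreover have eq2: "svls k (x#y#zs) = map ((#) k) (svl x) @ [] # svls (Suc k) (y#zs)" by simp
    ultimately show ?case using IHx IHr
      by (simp del: leafpathss.simps svls.simps add: adj_append lm b Rel_mid hd_map list_all2_appendI)
  qed
  moreover have "ts \<noteq> []" using Node.prems by auto
  ultimately show ?case using Node.prems by auto
qed


lemma lc_filter: "[f j. j <- xs, P j] = map f (filter P xs)"
  by (induction xs) auto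

lemma zip_nth_map: "length w = length s \<Longrightarrow> zip w s = map (\<lambda>j. (w!j, s!j)) [0..<length w]"
  by (rule nth_equalityI) auto

lemma lc: "length w = length s \<Longrightarrow> (\<And>j. j<length w \<Longrightarrow> P j \<longleftrightarrow> s!j \<in> V) \<Longrightarrow>
  [w!j. j <- [0..<length w], P j] = map fst (filter (\<lambda>p. snd p \<in> V) (zip w s))"
proof -
  assume l: "length w = length s" and P: "\<And>j. j<length w \<Longrightarrow> P j \<longleftrightarrow> s!j \<in> V"
  have "filter P [0..<length w] = filter (\<lambda>j. s!j \<in> V) [0..<length w]"
    using P by (intro filter_cong) auto
  then show ?thesis
    by (simp add: lc_filter zip_nth_map[OF l] filter_map o_def)
qed

lemma nleaves_svl: "reduced t \<Longrightarrow> nleaves t = Suc (length (svl t))"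
proof -
  assume r: "reduced t"
  then have "leafpaths t \<noteq> []" "length (leafpaths t) - 1 = length (svl t)"
    using main_lp[OF r] by (auto simp: length_adj dest!: list_all2_lengthD)
  then show ?thesis by (cases "leafpaths t") (auto simp: nleaves_def)
qed

lemma prefix2_svl: "reduced t \<Longrightarrow> j < length (svl t) \<Longrightarrow>
   (prefix v (leafpaths t ! j) \<and> prefix v (leafpaths t ! Suc j)) \<longleftrightarrow> prefix v (svl t ! j)"
proof -
  assume r: "reduced t" and j: "j < length (svl t)"
  from main_lp[OF r] have L: "list_all2 Rel (adj (leafpaths t)) (svl t)" by auto
  then have "Rel (adj (leafpaths t) ! j) (svl t ! j)" using j by (auto dest: list_all2_nthD2)
  moreover have "adj (leafpaths t) ! j = (leafpaths t ! j, leafpaths t ! Suc j)"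
    using j L list_all2_lengthD[OF L] by (auto simp: adj_def nth_tl)
  ultimately show ?thesis by (simp add: Rel_def)
qed

lemma internal_Leaf: "internal Leaf = {}"
proof -
  have "sub Leaf p \<noteq> Some (Node ts)" for p ts by (cases p) auto
  then show ?thesis by (auto simp: internal_def)
qed

lemma internal_Node: "p \<in> internal (Node ts) \<longleftrightarrow> p = [] \<or> (\<exists>i<length ts. \<exists>q. p = i # q \<and> q \<in> internal (ts!i))"
  by (cases p) (auto simp: internal_def)

lemma set_svls: "p \<in> set (svls k ts) \<longleftrightarrow> (p = [] \<and> 2 \<le> length ts) \<or> (\<exists>i<length ts. \<exists>q. p = (k+i) # q \<and> q \<in> set (svl (ts!i)))"
proof (induction ts arbitrary: k rule: induct_list012)
  case 1
  then show ?case by simp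
next
  case (2 x)
  then show ?case by auto
next
  case (3 x y zs)
  show ?case
  proof
    assume "p \<in> set (svls k (x # y # zs))"
    moreover have "set (svls k (x#y#zs)) = (#) k ` set (svl x) \<union> {[]} \<union> set (svls (Suc k) (y#zs))" by simp
    ultimately consider "p \<in> (#) k ` set (svl x)" | "p = []" | "p \<in> set (svls (Suc k) (y # zs))" by blast
    then show "(p = [] \<and> 2 \<le> length (x # y # zs)) \<or> (\<exists>i<length (x # y # zs). \<exists>q. p = (k+i) # q \<and> q \<in> set (svl ((x # y # zs)!i)))"
    proof cases
      case 1 then show ?thesis by force
    next
      case 2 then show ?thesis by simp
    next
      case 3
      from 3 "3.IH"(2)[of "Suc k"] have "p = [] \<or> (\<exists>i<length (y#zs). \<exists>q. p = (Suc k + i) # q \<and> q \<in> set (svl ((y#zs)!i)))" by auto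
      then show ?thesis
      proof
        assume "p = []" then show ?thesis by simp
      next
        assume "\<exists>i<length (y#zs). \<exists>q. p = (Suc k + i) # q \<and> q \<in> set (svl ((y#zs)!i))"
        then obtain i q where "i < length (y#zs)" "p = (Suc k + i) # q" "q \<in> set (svl ((y#zs)!i))"
          by blast
        then show ?thesis by (intro disjI2 exI[of _ "Suc i"]) auto
      qed
    qed
  next
    assume "(p = [] \<and> 2 \<le> length (x # y # zs)) \<or> (\<exists>i<length (x # y # zs). \<exists>q. p = (k+i) # q \<and> q \<in> set (svl ((x # y # zs)!i)))"
    then consider "p = []" | i q where "i < length (x # y # zs)" "p = (k+i) # q" "q \<in> set (svl ((x # y # zs)!i))" by auto
    then show "p \<in> set (svls k (x # y # zs))"
    proof cases
      case 1 then show ?thesis by simp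
    next
      case 2
      show ?thesis
      proof (cases i)
        case 0 then show ?thesis using 2 by simp
      next
        case (Suc i')
        then have "p \<in> set (svls (Suc k) (y # zs))" using 2 "3.IH"(2)[of "Suc k"] by auto
        then show ?thesis by simp
      qed
    qed
  qed
qed

lemma set_svl: "reduced t \<Longrightarrow> set (svl t) = internal t"
proof (induction t)
  case Leaf
  then show ?case by (simp add: internal_Leaf)
next
  case (Node ts)
  have "\<forall>i<length ts. set (svl (ts!i)) = internal (ts!i)" using Node by auto
  then show ?case using Node.prems
    by (auto simp: set_eq_iff set_svls internal_Node)
qed

lemma sees_svl: "reduced t \<Longrightarrow> j < length (svl t) \<Longrightarrow> sees t v j \<longleftrightarrow> v = svl t ! j"
proof -
  assume r: "reduced t" and j: "j < length (svl t)"
  have int: "svl t ! j \<in> internal t" using set_svl[OF r] j by (metis nth_mem)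
  show ?thesis
    unfolding sees_def using prefix2_svl[OF r j] j int nleaves_svl[OF r]
    by (auto intro: prefix_order.antisym)
qed

lemma seen_word_eq: "reduced t \<Longrightarrow> length w = length (svl t) \<Longrightarrow>
   seen_word t w V = map fst (filter (\<lambda>p. snd p \<in> V) (zip w (svl t)))"
  unfolding seen_word_def
  by (rule lc) (auto simp: sees_svl)




lemma sub_append: "sub t (p @ q) = (case sub t p of None \<Rightarrow> None | Some s \<Rightarrow> sub s q)"
proof (induction p arbitrary: t)
  case Nil then show ?case by simp
next
  case (Cons k p)
  then show ?case by (cases t) auto
qed

lemma sub_reduced: "reduced t \<Longrightarrow> sub t p = Some s \<Longrightarrow> reduced s"
proof (induction p arbitrary: t)
  case Nil then show ?case by simp
next
  case (Cons k p)
  then show ?case by (cases t) (auto split: if_splits intro: Cons.IH[of "_ ! k"])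
qed

lemma filter_prefix_map: "filter (prefix (k # v)) (map ((#) j) xs) = (if j = k then map ((#) k) (filter (prefix v) xs) else [])"
  by (induction xs) auto

lemma filter_prefix_svls: "filter (prefix (k # v)) (svls m ts) =
   (if m \<le> k \<and> k < m + length ts then map ((#) k) (filter (prefix v) (svl (ts!(k-m)))) else [])"
proof (induction ts arbitrary: m rule: induct_list012)
  case 1 then show ?case by auto
next
  case (2 x) then show ?case by (auto simp: filter_prefix_map)
next
  case (3 x y zs)
  have that_aux: "k - m = Suc n \<Longrightarrow> k - Suc m = n" for n by arith
  have "filter (prefix (k # v)) (svls m (x # y # zs)) =
     filter (prefix (k # v)) (map ((#) m) (svl x)) @ filter (prefix (k # v)) (svls (Suc m) (y # zs))"
    by simp
  also have "\<dots> = (if m \<le> k \<and> k < m + length (x # y # zs) then map ((#) k) (filter (prefix v) (svl ((x # y # zs)!(k-m)))) else [])"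
    unfolding filter_prefix_map "3.IH"(2)
    using that_aux by (cases "k - m") (auto simp: Suc_diff_le)
  finally show ?case .
qed

lemma filter_prefix_svl: "sub t v = Some s \<Longrightarrow> filter (prefix v) (svl t) = map ((@) v) (svl s)"
proof (induction v arbitrary: t)
  case Nil then show ?case by simp
next
  case (Cons k v)
  then obtain ts where t: "t = Node ts" and k: "k < length ts" and s: "sub (ts!k) v = Some s"
    by (cases t) (auto split: if_splits)
  show ?case using Cons.IH[OF s] k by (simp add: t filter_prefix_svls)
qed

definition PP :: "path set \<Rightarrow> path \<Rightarrow> bool" where
  "PP c u \<longleftrightarrow> \<not> (\<exists>v\<in>c. prefix v u)"

lemma PP_Cons: "[] \<notin> c \<Longrightarrow> PP c (j # u) = PP {p. j # p \<in> c} u"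
  unfolding PP_def
  apply (rule iffI)
   apply auto[1]
  apply clarsimp
  subgoal for v by (cases v) auto
  done

lemma PP_Nil: "[] \<notin> c \<Longrightarrow> PP c []"
  by (auto simp: PP_def)

lemma length_rcuts: "length (rcuts k c ts) = length ts"
  by (induction ts arbitrary: k) auto

lemma svl_rcut: "svl (rcut c t) = filter (PP c) (svl t)"
proof (induction t arbitrary: c)
  case Leaf then show ?case by simp
next
  case (Node ts)
  show ?case
  proof (cases "[] \<in> c")
    case True
    then have "\<forall>a. \<not> PP c a" unfolding PP_def by (metis Nil_prefix)
    then show ?thesis using True by simp
  next
    case False
    have "svls k (rcuts k c ts) = filter (PP c) (svls k ts)" for k
      using Node.IH
    proof (induction ts arbitrary: k rule: induct_list012)
      case 1 then show ?case by simp
    next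
      case (2 x) then show ?case
        by (simp add: filter_map o_def PP_Cons[OF False])
    next
      case (3 x y zs)
      have "svls k (rcuts k c (x # y # zs)) = map ((#) k) (svl (rcut {p. k # p \<in> c} x)) @ [] # svls (Suc k) (rcuts (Suc k) c (y # zs))"
        by simp
      also have "\<dots> = filter (PP c) (svls k (x # y # zs))"
        using 3 by (simp add: filter_map o_def PP_Cons[OF False] PP_Nil[OF False])
      finally show ?case .
    qed
    then show ?thesis using False by simp
  qed
qed

lemma reduced_rcut: "reduced t \<Longrightarrow> reduced (rcut c t)"
proof (induction t arbitrary: c)
  case Leaf then show ?case by simp
next
  case (Node ts)
  have "set us \<subseteq> set ts \<Longrightarrow> \<forall>s\<in>set (rcuts k c us). reduced s" for us k
    by (induction us arbitrary: k) (use Node.IH Node.prems in auto)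
  then show ?case using Node.prems by (auto simp: length_rcuts)
qed

lemma last_rcuts: "ts \<noteq> [] \<Longrightarrow> last (rcuts k c ts) = rcut {p. (k + length ts - 1) # p \<in> c} (last ts)"
proof (induction ts arbitrary: k)
  case Nil then show ?case by simp
next
  case (Cons a ts)
  then show ?case by (cases ts) auto
qed

lemma last_leafpathss: "ts \<noteq> [] \<Longrightarrow> \<forall>s\<in>set ts. leafpaths s \<noteq> [] \<Longrightarrow>
   last (leafpathss k ts) = (k + length ts - 1) # last (leafpaths (last ts))"
proof (induction ts arbitrary: k)
  case Nil then show ?case by simp
next
  case (Cons a ts)
  show ?case
  proof (cases ts)
    case Nil then show ?thesis using Cons by (simp add: last_map)
  next
    case (Cons b ts')
    have "leafpathss (Suc k) ts \<noteq> []"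
      using Cons.prems \<open>ts = b # ts'\<close> by auto
    then show ?thesis using Cons.IH[of "Suc k"] Cons.prems \<open>ts = b # ts'\<close> by auto
  qed
qed

lemma reduced_leafpaths_ne: "reduced t \<Longrightarrow> leafpaths t \<noteq> []"
  using main_lp by blast

lemma last_leafpaths_Node: "reduced (Node ts) \<Longrightarrow>
   last (leafpaths (Node ts)) = (length ts - 1) # last (leafpaths (last ts))"
proof -
  assume r: "reduced (Node ts)"
  then have "ts \<noteq> []" by auto
  then show ?thesis using last_leafpathss[of ts 0] reduced_leafpaths_ne r by auto
qed

lemma internal_sub: "v \<in> internal t \<longleftrightarrow> (\<exists>ts. sub t v = Some (Node ts))"
  by (simp add: internal_def)

lemma leaf_below: "reduced t \<Longrightarrow> v \<in> internal t \<Longrightarrow> \<exists>l\<in>set (leafpaths t). prefix v l"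
proof -
  assume r: "reduced t" and v: "v \<in> internal t"
  then obtain j where j: "j < length (svl t)" "v = svl t ! j"
    using set_svl[OF r] by (metis in_set_conv_nth)
  then have "prefix v (leafpaths t ! j)" using prefix2_svl[OF r j(1), of v] by simp
  moreover have "j < length (leafpaths t)" using nleaves_svl[OF r] j by (simp add: nleaves_def)
  ultimately show ?thesis by auto
qed




definition Fr :: "ptree \<Rightarrow> path set" where
  "Fr t = {v \<in> internal t. corolla (the (sub t v))}"

lemma Nil_internal: "[] \<in> internal (Node ts)"
  by (simp add: internal_def)

lemma internal_empty_iff: "internal s = {} \<longleftrightarrow> s = Leaf"
proof (cases s)
  case Leaf then show ?thesis by (simp add: internal_Leaf)
next
  case (Node ts) then show ?thesis using Nil_internal[of ts] by auto
qed

lemma corolla_Node: "corolla (Node ts) \<longleftrightarrow> (\<forall>s\<in>set ts. s = Leaf)"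
proof -
  have "corolla (Node ts) \<longleftrightarrow> (\<forall>i<length ts. internal (ts!i) = {})"
  proof
    assume c: "corolla (Node ts)"
    show "\<forall>i<length ts. internal (ts!i) = {}"
    proof (intro allI impI equals0I)
      fix i q assume "i < length ts" "q \<in> internal (ts!i)"
      then have "i # q \<in> internal (Node ts)" unfolding internal_Node by blast
      then show False using c unfolding corolla_def by blast
    qed
  next
    assume h: "\<forall>i<length ts. internal (ts!i) = {}"
    show "corolla (Node ts)" unfolding corolla_def
    proof (rule set_eqI)
      fix p show "p \<in> internal (Node ts) \<longleftrightarrow> p \<in> {[]}"
        unfolding internal_Node using h by blast
    qed
  qed
  also have "\<dots> \<longleftrightarrow> (\<forall>s\<in>set ts. s = Leaf)"
    unfolding internal_empty_iff by (metis in_set_conv_nth)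
  finally show ?thesis .
qed

lemma corolla_Leaf: "\<not> corolla Leaf"
  by (simp add: corolla_def internal_Leaf)

lemma fringe_below: "v \<in> Fr t \<Longrightarrow> u \<in> internal t \<Longrightarrow> prefix v u \<Longrightarrow> u = v"
proof -
  assume v: "v \<in> Fr t" and u: "u \<in> internal t" and p: "prefix v u"
  from p obtain q where q: "u = v @ q" by (auto simp: prefix_def)
  from v obtain s where s: "sub t v = Some s" "corolla s" by (auto simp: Fr_def internal_def)
  from u obtain ts where "sub t u = Some (Node ts)" by (auto simp: internal_def)
  then have "sub s q = Some (Node ts)" using s q by (simp add: sub_append)
  then have "q \<in> internal s" by (simp add: internal_def)
  then have "q = []" using s(2) by (simp add: corolla_def)
  then show ?thesis using q by simp
qed

lemma exists_fringe: "sub t u = Some s \<Longrightarrow> s \<noteq> Leaf \<Longrightarrow> \<exists>v. prefix u v \<and> v \<in> Fr t"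
proof (induction s arbitrary: u)
  case Leaf then show ?case by simp
next
  case (Node ts)
  show ?case
  proof (cases "\<forall>s\<in>set ts. s = Leaf")
    case True
    then have "u \<in> Fr t" using Node.prems by (simp add: Fr_def internal_def corolla_Node)
    then show ?thesis by (intro exI[of _ u]) simp
  next
    case False
    then obtain i where i: "i < length ts" "ts ! i \<noteq> Leaf" by (auto simp: in_set_conv_nth)
    have "sub t (u @ [i]) = Some (ts ! i)" using Node.prems i by (simp add: sub_append)
    then obtain v where v: "prefix (u @ [i]) v" "v \<in> Fr t" using Node.IH[OF nth_mem[OF i(1)] _ i(2)] by blast
    then show ?thesis using append_prefixD[OF v(1)] by blast
  qed
qed

lemma card_le1: "finite X \<Longrightarrow> (\<And>a b. a \<in> X \<Longrightarrow> b \<in> X \<Longrightarrow> a = b) \<Longrightarrow> card X \<le> 1"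
  by (metis card_le_Suc0_iff_eq One_nat_def)

lemma finite_internal: "reduced t \<Longrightarrow> finite (internal t)"
  using set_svl[of t] by (metis List.finite_set)

lemma adm_root: "reduced t \<Longrightarrow> c \<in> admissible_cuts t \<Longrightarrow> [] \<in> c \<Longrightarrow> c = {[]}"
proof -
  assume r: "reduced t" and c: "c \<in> admissible_cuts t" and n: "[] \<in> c"
  show ?thesis
  proof (rule ccontr)
    assume "c \<noteq> {[]}"
    then obtain v where v: "v \<in> c" "v \<noteq> []" using n by blast
    then have "v \<in> internal t" using c by (auto simp: admissible_cuts_def)
    then obtain l where l: "l \<in> set (leafpaths t)" "prefix v l" using leaf_below[OF r] by blast
    have fin: "finite {x \<in> c. prefix x l}"
      using c finite_internal[OF r] by (auto simp: admissible_cuts_def intro: finite_subset)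
    have "{[], v} \<subseteq> {x \<in> c. prefix x l}" using v n l by auto
    then have "card {[], v} \<le> card {x \<in> c. prefix x l}" using card_mono[OF fin] by blast
    moreover have "card {x \<in> c. prefix x l} \<le> 1" using c l by (auto simp: admissible_cuts_def)
    ultimately show False using v by simp
  qed
qed

lemma adm_single: "{[]} \<in> admissible_cuts (Node ts)"
proof -
  have "card {v \<in> {[]}. prefix v l} \<le> 1" for l :: path
    by (rule card_le1) auto
  then show ?thesis by (auto simp: admissible_cuts_def Nil_internal)
qed

definition FF :: "ptree \<Rightarrow> path set" where
  "FF t = {v \<in> Fr t. \<not> prefix v (last (leafpaths t))}"

lemma Fr_internal: "Fr t \<subseteq> internal t"
  by (auto simp: Fr_def)

lemma adm_plus_FF: "reduced t \<Longrightarrow> c \<subseteq> FF t \<Longrightarrow> c \<in> admissible_cuts_plus t"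
proof -
  assume r: "reduced t" and c: "c \<subseteq> FF t"
  have ci: "c \<subseteq> internal t" using c Fr_internal by (auto simp: FF_def)
  have fc: "finite c" using ci finite_internal[OF r] by (rule finite_subset)
  have "card {v \<in> c. prefix v l} \<le> 1" for l
  proof (rule card_le1)
    show "finite {v \<in> c. prefix v l}" using fc by simp
  next
    fix a b assume a: "a \<in> {v \<in> c. prefix v l}" and b: "b \<in> {v \<in> c. prefix v l}"
    then have "prefix a b \<or> prefix b a" using prefix_same_cases by blast
    moreover have "a \<in> Fr t" "b \<in> Fr t" "a \<in> internal t" "b \<in> internal t"
      using a b c ci by (auto simp: FF_def)
    ultimately show "a = b" using fringe_below by metis
  qed
  then have "c \<in> admissible_cuts t" unfolding admissible_cuts_def using ci by blast
  moreover have "\<not> (\<exists>v\<in>c. prefix v (last (leafpaths t)))" using c by (auto simp: FF_def)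
  ultimately show ?thesis unfolding admissible_cuts_plus_def by blast
qed




lemma alt_sum: "finite F \<Longrightarrow> (\<Sum>c\<in>Pow F. (-1::complex) ^ card c) = (if F = {} then 1 else 0)"
proof (induction F rule: finite_induct)
  case empty then show ?case by simp
next
  case (insert a F)
  have disj: "Pow F \<inter> insert a ` Pow F = {}" using insert.hyps(2) by auto
  have inj: "inj_on (insert a) (Pow F)" using insert.hyps(2)
    by (auto simp: inj_on_def)
  have "(\<Sum>c\<in>Pow (insert a F). (-1::complex) ^ card c) =
        (\<Sum>c\<in>Pow F. (-1::complex) ^ card c) + (\<Sum>c\<in>insert a ` Pow F. (-1::complex) ^ card c)"
    unfolding Pow_insert using insert.hyps(1) disj by (intro sum.union_disjoint) auto
  also have "(\<Sum>c\<in>insert a ` Pow F. (-1::complex) ^ card c) = (\<Sum>c\<in>Pow F. (-1::complex) ^ card (insert a c))"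
    using inj by (simp add: sum.reindex)
  also have "\<dots> = (\<Sum>c\<in>Pow F. - ((-1::complex) ^ card c))"
  proof (rule sum.cong)
    fix c assume "c \<in> Pow F"
    then have "finite c" "a \<notin> c" using insert.hyps finite_subset by auto
    then show "(-1::complex) ^ card (insert a c) = - ((-1) ^ card c)" by simp
  qed simp
  finally show ?case by (simp add: sum_negf)
qed

lemma sign_split: "n \<le> m \<Longrightarrow> ((-1::complex) ^ (m - n)) = (-1) ^ m * (-1) ^ n"
proof -
  assume "n \<le> m"
  then obtain d where m: "m = n + d" using le_Suc_ex by blast
  have "((-1::complex) ^ n) * (-1) ^ n = 1" by (simp flip: power_add add: power_mult_distrib[symmetric] mult_2[symmetric] power_mult)
  then show ?thesis unfolding m by (simp add: power_add algebra_simps)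
qed

lemma map_snd_filter_zip: "length w = length S \<Longrightarrow> map snd (filter (\<lambda>p. P (snd p)) (zip w S)) = filter P S"
proof -
  assume "length w = length S"
  then have "map snd (zip w S) = S" by simp
  then show ?thesis by (metis (no_types, lifting) filter_map comp_apply filter_cong)
qed

lemma length_fw: "length w = length S \<Longrightarrow> length (map fst (filter (\<lambda>p. P (snd p)) (zip w S))) = length (filter P S)"
  by (metis length_map map_snd_filter_zip)

lemma fw_cong: "(\<And>x. x \<in> set S \<Longrightarrow> P x \<longleftrightarrow> Q x) \<Longrightarrow>
   filter (\<lambda>p. P (snd p)) (zip w S) = filter (\<lambda>p. Q (snd p)) (zip w S)"
  by (rule filter_cong) (auto dest: set_zip_rightD)

lemma zip_fw: "length w = length S \<Longrightarrow>
   zip (map fst (filter (\<lambda>p. P (snd p)) (zip w S))) (filter P S) = filter (\<lambda>p. P (snd p)) (zip w S)"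
  by (metis map_snd_filter_zip zip_map_fst_snd)

lemma set_fw: "set (map fst (filter (\<lambda>p. P (snd p)) (zip w S))) \<subseteq> set w"
  by (auto dest: set_zip_leftD)

lemma dtree_ok_len: "dtree_ok A (t, w) \<Longrightarrow> reduced t \<and> length w = length (svl t)"
  by (auto simp: dtree_ok_def weight_def nleaves_svl)

lemma word_sub:
  assumes r: "reduced t" and l: "length w = length (svl t)" and s: "sub t v = Some s"
  shows "length (seen_word t w {u \<in> internal t. prefix v u}) = length (svl s)"
proof -
  have "seen_word t w {u \<in> internal t. prefix v u} = map fst (filter (\<lambda>p. prefix v (snd p)) (zip w (svl t)))"
    unfolding seen_word_eq[OF r l] using set_svl[OF r] by (subst fw_cong[where Q = "prefix v"]) auto
  then show ?thesis using length_fw[OF l] filter_prefix_svl[OF s] by simp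
qed

lemma dtree_piece:
  assumes x: "dtree_ok A (t, w)" and v: "v \<in> internal t"
  shows "dtree_ok A (the (sub t v), seen_word t w {u \<in> internal t. prefix v u})"
proof -
  from x have r: "reduced t" and l: "length w = length (svl t)" by (auto dest: dtree_ok_len)
  from v obtain ts where s: "sub t v = Some (Node ts)" by (auto simp: internal_def)
  have rs: "reduced (Node ts)" using sub_reduced[OF r s] .
  have "[] \<in> set (svl (Node ts))" using set_svl[OF rs] Nil_internal by blast
  then have ne: "length (svl (Node ts)) \<ge> 1" by (cases "svl (Node ts)") auto
  have "set (seen_word t w {u \<in> internal t. prefix v u}) \<subseteq> set w"
    unfolding seen_word_eq[OF r l] by (rule set_fw)
  then show ?thesis using x rs ne word_sub[OF r l s] nleaves_svl[OF rs] s
    by (auto simp: dtree_ok_def weight_def)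
qed

lemma Phi_list:
  assumes "\<Phi> [] = 1"
    and "\<forall>xs ys. basis_ok A xs \<longrightarrow> basis_ok A ys \<longrightarrow> \<Phi> (xs @ ys) = \<Phi> xs * \<Phi> ys"
  shows "basis_ok A xs \<Longrightarrow> \<Phi> xs = prod_list (map (\<lambda>x. \<Phi> [x]) xs)"
proof (induction xs)
  case Nil then show ?case using assms by simp
next
  case (Cons x xs)
  have "\<Phi> (x # xs) = \<Phi> ([x] @ xs)" by simp
  also have "\<dots> = \<Phi> [x] * \<Phi> xs"
  proof -
    have b1: "basis_ok A [x]" and b2: "basis_ok A xs" using Cons.prems by (auto simp: basis_ok_def)
    then show ?thesis using assms(2) by blast
  qed
  finally show ?case using Cons by (simp add: basis_ok_def)
qed




lemma tree_identity:
  fixes \<phi> :: "'a list \<Rightarrow> complex" and \<Phi> :: "'a dtree list \<Rightarrow> complex"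
  assumes P0: "\<Phi> [] = 1"
    and Pm: "\<forall>xs ys. basis_ok A xs \<longrightarrow> basis_ok A ys \<longrightarrow> \<Phi> (xs @ ys) = \<Phi> xs * \<Phi> ys"
    and Pt: "\<forall>x. dtree_ok A x \<longrightarrow> \<Phi> [x] = phi_ext \<phi> x"
    and x: "dtree_ok A (t, w)"
  shows "(\<Sum>c\<in>admissible_cuts_plus t. kappa \<phi> [Rc c (t, w)] * \<Phi> (Pc c (t, w))) = phi_ext \<phi> (t, w)"
proof -
  from x have r: "reduced t" and l: "length w = length (svl t)" by (auto dest: dtree_ok_len)
  define S where "S = svl t"
  define I where "I = internal t"
  have IS: "set S = I" using set_svl[OF r] by (simp add: S_def I_def)
  have lS: "length w = length S" using l by (simp add: S_def)
  have fI: "finite I" using finite_internal[OF r] by (simp add: I_def)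
  have "weight t \<ge> 1" using x by (simp add: dtree_ok_def)
  then obtain ts where t: "t = Node ts" by (cases t) (auto simp: weight_def nleaves_def)
  have nilI: "[] \<in> I" using Nil_internal by (simp add: I_def t)
  have lpne: "leafpaths t \<noteq> []" using reduced_leafpaths_ne[OF r] .
  have lents: "length ts \<ge> 2" using r t by simp
  define sw where "sw v = seen_word t w {v}" for v
  define g where "g v = \<phi> (sw v)" for v
  have sw_eq: "sw v = map fst (filter (\<lambda>p. snd p \<in> {v}) (zip w S))" for v
    unfolding sw_def S_def by (rule seen_word_eq[OF r l])

  have step1: "\<Phi> (Pc c (t, w)) = (\<Prod>v\<in>c. if v \<in> Fr t then g v else 0)" if c: "c \<subseteq> I" for c
  proof -
    have fc: "finite c" using fI c finite_subset by blast
    define pc where "pc v = (the (sub t v), seen_word t w {u \<in> internal t. prefix v u})" for v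
    have Pc_eq: "Pc c (t, w) = map pc (sorted_list_of_set c)" by (simp add: Pc_def pc_def)
    have ok: "dtree_ok A (pc v)" if "v \<in> c" for v
      using dtree_piece[OF x] c that by (auto simp: pc_def I_def)
    have "basis_ok A (Pc c (t,w))" using ok fc by (auto simp: Pc_eq basis_ok_def)
    then have "\<Phi> (Pc c (t,w)) = prod_list (map (\<lambda>y. \<Phi> [y]) (Pc c (t,w)))"
      using Phi_list[OF P0 Pm] by blast
    also have "\<dots> = (\<Prod>v\<in>c. \<Phi> [pc v])"
      using fc prod.distinct_set_conv_list[of "sorted_list_of_set c" "\<lambda>v. \<Phi> [pc v]"] by (simp add: Pc_eq o_def)
    also have "\<dots> = (\<Prod>v\<in>c. if v \<in> Fr t then g v else 0)"
    proof (rule prod.cong[OF refl])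
      fix v assume v: "v \<in> c"
      have "\<Phi> [pc v] = phi_ext \<phi> (pc v)" using Pt ok[OF v] by blast
      also have "\<dots> = (if v \<in> Fr t then g v else 0)"
      proof (cases "v \<in> Fr t")
        case True
        have "{u \<in> internal t. prefix v u} = {v}" using fringe_below[OF True] True Fr_internal by auto
        then show ?thesis using True by (simp add: phi_ext_def pc_def Fr_def g_def sw_def)
      next
        case False
        then have "\<not> corolla (the (sub t v))" using v c by (auto simp: Fr_def I_def)
        then show ?thesis using False by (simp add: phi_ext_def pc_def)
      qed
      finally show "\<Phi> [pc v] = (if v \<in> Fr t then g v else 0)" .
    qed
    finally show ?thesis .
  qed

  have admI: "c \<subseteq> I" if "c \<in> admissible_cuts_plus t" for c
    using that by (auto simp: admissible_cuts_plus_def admissible_cuts_def I_def)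
  have fin_adm: "finite (admissible_cuts_plus t)"
  proof (rule finite_subset)
    show "admissible_cuts_plus t \<subseteq> Pow I" using admI by auto
  qed (use fI in simp)
  have FFsub: "Pow (FF t) \<subseteq> admissible_cuts_plus t" using adm_plus_FF[OF r] by auto
  have finFF: "finite (FF t)" using fI Fr_internal by (auto simp: FF_def I_def intro: finite_subset)

  have "(\<Sum>c\<in>admissible_cuts_plus t. kappa \<phi> [Rc c (t, w)] * \<Phi> (Pc c (t, w)))
      = (\<Sum>c\<in>Pow (FF t). kappa \<phi> [Rc c (t, w)] * \<Phi> (Pc c (t, w)))"
  proof (rule sum.mono_neutral_right[OF fin_adm FFsub])
    show "\<forall>c\<in>admissible_cuts_plus t - Pow (FF t). kappa \<phi> [Rc c (t, w)] * \<Phi> (Pc c (t, w)) = 0"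
    proof
      fix c assume c: "c \<in> admissible_cuts_plus t - Pow (FF t)"
      then obtain v where v: "v \<in> c" "v \<notin> FF t" by auto
      have "\<not> prefix v (last (leafpaths t))" using c v by (auto simp: admissible_cuts_plus_def)
      then have vF: "v \<notin> Fr t" using v by (auto simp: FF_def)
      have cI: "c \<subseteq> I" using admI c by blast
      have fc: "finite c" using fI cI finite_subset by blast
      have "\<Phi> (Pc c (t, w)) = 0" unfolding step1[OF cI] using fc v vF
        by (subst prod_zero_iff) auto
      then show "kappa \<phi> [Rc c (t, w)] * \<Phi> (Pc c (t, w)) = 0" by simp
    qed
  qed
  also have "\<dots> = (\<Sum>c\<in>Pow (FF t). (if prime_tree t then (-1::complex)^(card I - 1) * (\<Prod>v\<in>I. g v) else 0) * (-1) ^ card c)"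
  proof (rule sum.cong[OF refl])
    fix c assume "c \<in> Pow (FF t)"
    then have c: "c \<subseteq> FF t" by simp
    have cFr: "c \<subseteq> Fr t" and cI: "c \<subseteq> I" using c Fr_internal by (auto simp: FF_def I_def)
    have fc: "finite c" using fI cI finite_subset by blast
    have nil_c: "[] \<notin> c" using c by (auto simp: FF_def)
    define R where "R = rcut c t"
    define w' where "w' = map fst (filter (\<lambda>p. PP c (snd p)) (zip w S))"
    have PPI: "PP c u \<longleftrightarrow> u \<notin> c" if u: "u \<in> I" for u
    proof
      assume "PP c u" then show "u \<notin> c" by (auto simp: PP_def)
    next
      assume "u \<notin> c"
      show "PP c u"
      proof (rule ccontr)
        assume "\<not> PP c u"
        then obtain v where "v \<in> c" "prefix v u" by (auto simp: PP_def)
        then have "u = v" using fringe_below[of v t u] cFr u by (auto simp: I_def)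
        then show False using \<open>u \<notin> c\<close> \<open>v \<in> c\<close> by simp
      qed
    qed
    have Rc_eq: "Rc c (t, w) = (R, w')"
    proof -
      have "filter (\<lambda>p. snd p \<in> {u \<in> internal t. \<not> (\<exists>v\<in>c. prefix v u)}) (zip w S) = filter (\<lambda>p. PP c (snd p)) (zip w S)"
        by (rule fw_cong) (use IS in \<open>auto simp: PP_def I_def\<close>)
      then show ?thesis unfolding Rc_def R_def w'_def fst_conv snd_conv seen_word_eq[OF r l] S_def by simp
    qed
    have rR: "reduced R" unfolding R_def by (rule reduced_rcut[OF r])
    have svlR: "svl R = filter (PP c) S" unfolding R_def S_def by (rule svl_rcut)
    have lR: "length w' = length (svl R)" using length_fw[OF lS] svlR by (simp add: w'_def)
    have intR: "internal R = I - c"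
      using set_svl[OF rR] svlR IS PPI by auto
    have swR: "seen_word R w' {v} = sw v" if v: "v \<in> I - c" for v
    proof -
      have "seen_word R w' {v} = map fst (filter (\<lambda>p. snd p \<in> {v}) (zip w' (svl R)))"
        by (rule seen_word_eq[OF rR lR])
      also have "zip w' (svl R) = filter (\<lambda>p. PP c (snd p)) (zip w S)"
        unfolding svlR w'_def by (rule zip_fw[OF lS])
      also have "filter (\<lambda>p. snd p \<in> {v}) (filter (\<lambda>p. PP c (snd p)) (zip w S)) = filter (\<lambda>p. snd p \<in> {v}) (zip w S)"
        unfolding filter_filter using v PPI by (intro filter_cong) auto
      finally show ?thesis using sw_eq by simp
    qed
    have nilR: "[] \<in> internal R" using intR nilI nil_c by simp
    have Rnode: "R = Node (rcuts 0 c ts)" using nil_c by (simp add: R_def t)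
    have nlR: "nleaves R \<ge> 2" using nleaves_svl[OF rR] nilR set_svl[OF rR]
      by (cases "svl R") auto
    have nlt: "nleaves t \<ge> 2" using nleaves_svl[OF r] nilI IS
      by (cases "svl t") (auto simp: S_def)
    have tsne: "ts \<noteq> []" using lents by auto
    have lastR: "last (rcuts 0 c ts) = rcut {p. (length ts - 1) # p \<in> c} (last ts)"
      using last_rcuts[OF tsne, of 0 c] by simp
    have "last (rcuts 0 c ts) = Leaf \<longleftrightarrow> last ts = Leaf"
    proof (cases "last ts")
      case Leaf then show ?thesis using lastR by simp
    next
      case (Node ts')
      have "last (leafpaths t) = (length ts - 1) # last (leafpaths (last ts))"
        using last_leafpaths_Node r t by simp
      then have "[length ts - 1] \<notin> c" using c by (auto simp: FF_def)
      then show ?thesis using lastR Node by simp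
    qed
    moreover have "rcuts 0 c ts \<noteq> []" using tsne length_rcuts[of 0 c ts] by auto
    ultimately have primeR: "prime_tree R \<longleftrightarrow> prime_tree t"
      using nlR nlt tsne by (simp add: prime_tree_def Rnode t)
    have PSTR: "R \<in> PST (length w') \<longleftrightarrow> prime_tree t"
      using rR primeR lR nleaves_svl[OF rR] by (simp add: PST_def weight_def)
    have cardR: "ninternal R = card I - card c"
      using intR fc cI card_Diff_subset by (simp add: ninternal_def)
    have kap: "kappa \<phi> [Rc c (t,w)] = (if prime_tree t then (-1)^(card I - card c - 1) * (\<Prod>v\<in>I - c. g v) else 0)"
    proof -
      have "(\<Prod>v\<in>internal R. \<phi> (seen_word R w' {v})) = (\<Prod>v\<in>I - c. g v)"
        unfolding intR by (rule prod.cong[OF refl]) (simp add: swR g_def)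
      then show ?thesis unfolding Rc_eq kappa_def using PSTR cardR by simp
    qed
    have phi: "\<Phi> (Pc c (t,w)) = (\<Prod>v\<in>c. g v)"
      unfolding step1[OF cI] using cFr by (intro prod.cong) auto
    have "card c \<le> card (I - {[]})" using cI nil_c by (intro card_mono) (use fI in auto)
    then have cardlt: "card c \<le> card I - 1" using nilI fI by simp
    have sign: "(-1::complex)^(card I - card c - 1) = (-1)^(card I - 1) * (-1)^card c"
      using sign_split[OF cardlt] by (simp add: diff_commute)
    have prods: "(\<Prod>v\<in>I - c. g v) * (\<Prod>v\<in>c. g v) = (\<Prod>v\<in>I. g v)"
      using prod.subset_diff[OF cI fI, of g] by simp
    show "kappa \<phi> [Rc c (t, w)] * \<Phi> (Pc c (t, w)) =
      (if prime_tree t then (-1::complex)^(card I - 1) * (\<Prod>v\<in>I. g v) else 0) * (-1) ^ card c"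
      unfolding kap phi sign using prods[symmetric] by (simp add: algebra_simps)
  qed
  also have "\<dots> = (if prime_tree t then (-1::complex)^(card I - 1) * (\<Prod>v\<in>I. g v) else 0) * (if FF t = {} then 1 else 0)"
    using alt_sum[OF finFF] by (simp add: sum_distrib_left[symmetric])
  also have "\<dots> = phi_ext \<phi> (t, w)"
  proof -
    have cor_prime: "prime_tree t" if "corolla t"
    proof -
      have "\<forall>s\<in>set ts. s = Leaf" using that by (simp add: corolla_Node t)
      moreover have "ts \<noteq> []" using lents by auto
      ultimately have "last ts = Leaf" using last_in_set by blast
      moreover have "nleaves t \<ge> 2" using nleaves_svl[OF r] nilI IS by (cases "svl t") (auto simp: S_def)
      ultimately show ?thesis using lents by (auto simp: prime_tree_def t)
    qed
    have cor_FF: "FF t = {}" if "corolla t"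
      using that Fr_internal[of t] by (force simp: corolla_def FF_def)
    have prime_FF: "corolla t" if pr: "prime_tree t" and ff: "FF t = {}"
    proof (rule ccontr)
      assume nc: "\<not> corolla t"
      then obtain u where u: "u \<in> internal t" "u \<noteq> []" using nilI by (auto simp: corolla_def I_def)
      then obtain ts' where "sub t u = Some (Node ts')" by (auto simp: internal_def)
      then obtain v where v: "prefix u v" "v \<in> Fr t" using exists_fringe by blast
      have vne: "v \<noteq> []" using v u by auto
      have lt: "last ts = Leaf" using pr by (simp add: prime_tree_def t)
      have ll: "last (leafpaths t) = [length ts - 1]"
        using last_leafpaths_Node r t lt by simp
      have "v \<notin> FF t" using ff by simp
      then have "prefix v [length ts - 1]" using v ll by (auto simp: FF_def)
      then have "v = [length ts - 1]" using vne by (cases v) auto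
      moreover have "sub t [length ts - 1] = Some Leaf"
      proof -
        have "ts \<noteq> []" using lents by auto
        then have "ts ! (length ts - 1) = Leaf" using lt by (simp add: last_conv_nth)
        moreover have "length ts - 1 < length ts" using lents by simp
        ultimately show ?thesis by (simp add: t)
      qed
      ultimately show False using v(2) by (auto simp: Fr_def internal_def)
    qed
    show ?thesis
    proof (cases "prime_tree t")
      case False
      then have "\<not> corolla t" using cor_prime by blast
      then have "phi_ext \<phi> (t, w) = 0" by (simp add: phi_ext_def)
      then show ?thesis using False by simp
    next
      case True
      show ?thesis
      proof (cases "FF t = {}")
        case False
        then have "\<not> corolla t" using cor_FF by blast
        then have "phi_ext \<phi> (t, w) = 0" by (simp add: phi_ext_def)
        then show ?thesis using False by simp
      next
        case ff: True
        have cor: "corolla t" using prime_FF True ff by blast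
        then have I1: "I = {[]}" by (simp add: corolla_def I_def)
        have "set S = {[]}" using IS I1 by simp
        then have H: "\<And>x. x \<in> set S \<Longrightarrow> (x \<in> {[]}) = True" by blast
        have "filter (\<lambda>p. snd p \<in> {[]}) (zip w S) = filter (\<lambda>p. True) (zip w S)"
          using fw_cong[where P = "\<lambda>u. u \<in> {[]}" and Q = "\<lambda>u. True" and S = S and w = w, OF H] .
        then have "filter (\<lambda>p. snd p \<in> {[]}) (zip w S) = zip w S" by simp
        then have sw0: "sw [] = w" using sw_eq lS by simp
        have lhs: "(if prime_tree t then (-1::complex)^(card I - 1) * (\<Prod>v\<in>I. g v) else 0) * (if FF t = {} then 1 else 0) = g []"
          using True ff I1 by simp
        have ph: "phi_ext \<phi> (t, w) = \<phi> w" using cor by (simp add: phi_ext_def)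
        have gw: "g [] = \<phi> w" by (simp add: g_def sw0)
        show ?thesis by (simp only: lhs gw ph)
      qed
    qed
  qed
  finally show ?thesis .
qed




lemma in_listset: "cs \<in> listset As \<longleftrightarrow> list_all2 (\<in>) cs As"
proof (induction As arbitrary: cs)
  case Nil then show ?case by auto
next
  case (Cons a As)
  then show ?case by (cases cs) (auto simp: set_Cons_def)
qed

lemma finite_adm: "reduced t \<Longrightarrow> finite (admissible_cuts t)"
proof -
  assume r: "reduced t"
  have "admissible_cuts t \<subseteq> Pow (internal t)" by (auto simp: admissible_cuts_def)
  then show ?thesis using finite_internal[OF r] by (meson finite_Pow_iff finite_subset)
qed

lemma finite_listset: "\<forall>A\<in>set As. finite A \<Longrightarrow> finite (listset As)"
proof -
  assume f: "\<forall>A\<in>set As. finite A"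
  have "listset As \<subseteq> {cs. set cs \<subseteq> \<Union>(set As) \<and> length cs = length As}"
    by (auto simp: in_listset list_all2_conv_all_nth in_set_conv_nth) (blast intro: nth_mem)
  moreover have "finite {cs. set cs \<subseteq> \<Union>(set As) \<and> length cs = length As}"
    using f by (intro finite_lists_length_eq) auto
  ultimately show ?thesis by (rule finite_subset)
qed

lemma kappa_long: "kappa \<phi> (a # b # rest) = 0"
  by (simp add: kappa_def)

lemma rcut_root: "rcut {[]} t = Leaf"
  by (cases t) auto

lemma dtree_Node: "dtree_ok A (t, w) \<Longrightarrow> \<exists>ts. t = Node ts"
  by (cases t) (auto simp: dtree_ok_def weight_def nleaves_def)

lemma Pc_root: assumes "dtree_ok A y" shows "Pc {[]} y = [y]"
proof -
  obtain t w where y: "y = (t, w)" by (cases y)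
  from assms y have r: "reduced t" and l: "length w = length (svl t)" by (auto dest: dtree_ok_len)
  have H: "\<And>x. x \<in> set (svl t) \<Longrightarrow> (x \<in> {u \<in> internal t. prefix [] u}) = True"
    using set_svl[OF r] by auto
  have "seen_word t w {u \<in> internal t. prefix [] u} = map fst (filter (\<lambda>p. True) (zip w (svl t)))"
    unfolding seen_word_eq[OF r l]
    using fw_cong[where P = "\<lambda>x. x \<in> {u \<in> internal t. prefix [] u}" and Q = "\<lambda>u. True" and S = "svl t" and w = w, OF H]
    by simp
  also have "\<dots> = w" using l by simp
  finally show ?thesis by (simp add: Pc_def y)
qed

lemma basis_ok_Pc: "dtree_ok A (t, w) \<Longrightarrow> c \<subseteq> internal t \<Longrightarrow> basis_ok A (Pc c (t, w))"
proof -
  assume x: "dtree_ok A (t, w)" and c: "c \<subseteq> internal t"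
  have fc: "finite c" using c finite_internal dtree_ok_len[OF x] finite_subset by blast
  show ?thesis using fc c dtree_piece[OF x] by (auto simp: Pc_def basis_ok_def)
qed

theorem mainTheorem8:
  fixes A :: "'a set" and \<phi> :: "'a list \<Rightarrow> complex"
    and \<Phi> :: "'a dtree list \<Rightarrow> complex"
  assumes "\<Phi> [] = 1"
    and "\<forall>xs ys. basis_ok A xs \<longrightarrow> basis_ok A ys \<longrightarrow> \<Phi> (xs @ ys) = \<Phi> xs * \<Phi> ys"
    and "\<forall>x. dtree_ok A x \<longrightarrow> \<Phi> [x] = phi_ext \<phi> x"
  shows "\<forall>xs. basis_ok A xs \<longrightarrow> \<Phi> xs = eps xs + prec (kappa \<phi>) \<Phi> xs"
proof (intro allI impI)
  fix xs :: "'a dtree list" assume b: "basis_ok A xs"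
  show "\<Phi> xs = eps xs + prec (kappa \<phi>) \<Phi> xs"
  proof (cases xs)
    case Nil then show ?thesis using assms(1) by (simp add: eps_def prec_def)
  next
    case (Cons x ys)
    obtain t w where xt: "x = (t, w)" by (cases x)
    have dx: "dtree_ok A (t, w)" using b Cons xt by (simp add: basis_ok_def)
    have bys: "basis_ok A ys" using b Cons by (simp add: basis_ok_def)
    from dx have r: "reduced t" by (auto dest: dtree_ok_len)
    obtain ts where t: "t = Node ts" using dtree_Node[OF dx] by blast
    define LS where "LS = listset (map (\<lambda>y. admissible_cuts (fst y)) ys)"
    define rep where "rep = replicate (length ys) ({[]} :: path set)"
    have dys: "\<And>y. y \<in> set ys \<Longrightarrow> dtree_ok A y" using bys by (simp add: basis_ok_def)
    have finLS: "finite LS" unfolding LS_def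
      by (rule finite_listset) (auto dest!: dys dtree_ok_len intro: finite_adm simp: dtree_ok_def)
    have repLS: "rep \<in> LS"
      unfolding LS_def rep_def in_listset list_all2_conv_all_nth
    proof (intro conjI allI impI)
      show "length (replicate (length ys) ({[]} :: path set)) = length (map (\<lambda>y. admissible_cuts (fst y)) ys)" by simp
    next
      fix i assume i: "i < length (replicate (length ys) ({[]} :: path set))"
      then have "dtree_ok A (fst (ys ! i), snd (ys ! i))" using dys by simp
      then obtain ts' where "fst (ys ! i) = Node ts'" using dtree_Node by blast
      then show "replicate (length ys) {[]} ! i \<in> map (\<lambda>y. admissible_cuts (fst y)) ys ! i"
        using i adm_single by simp
    qed
    have inner: "(\<Sum>cs\<in>LS. kappa \<phi> (norm (Rc c x # map2 Rc cs ys)) * \<Phi> (Pc c x @ concat (map2 Pc cs ys)))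
       = kappa \<phi> [Rc c x] * \<Phi> (Pc c x @ ys)" if c: "c \<in> admissible_cuts_plus t" for c
    proof -
      have nil_c: "[] \<notin> c"
      proof
        assume "[] \<in> c"
        moreover have "prefix [] (last (leafpaths t))" by simp
        ultimately show False using c by (auto simp: admissible_cuts_plus_def)
      qed
      have Rx: "fst (Rc c x) \<noteq> Leaf" using nil_c by (simp add: Rc_def xt t)
      have zero: "kappa \<phi> (norm (Rc c x # map2 Rc cs ys)) * \<Phi> (Pc c x @ concat (map2 Pc cs ys)) = 0"
        if cs: "cs \<in> LS - {rep}" for cs
      proof -
        have la: "list_all2 (\<in>) cs (map (\<lambda>y. admissible_cuts (fst y)) ys)" using cs by (simp add: LS_def in_listset)
        then have lcs: "length cs = length ys" by (simp add: list_all2_lengthD)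
        have "cs \<noteq> rep" using cs by simp
        then obtain i where i: "i < length ys" "cs ! i \<noteq> {[]}"
          using lcs by (auto simp: rep_def list_eq_iff_nth_eq)
        have ci: "cs ! i \<in> admissible_cuts (fst (ys ! i))"
          using la i by (auto simp: list_all2_conv_all_nth)
        have dyi: "dtree_ok A (ys ! i)" using dys i by simp
        have ryi: "reduced (fst (ys ! i))" using dyi by (cases "ys ! i") (auto dest: dtree_ok_len)
        have "[] \<notin> cs ! i" using adm_root[OF ryi ci] i by blast
        moreover obtain ts' where "fst (ys ! i) = Node ts'" using dtree_Node[of A "fst (ys ! i)" "snd (ys ! i)"] dyi by auto
        ultimately have "fst (Rc (cs ! i) (ys ! i)) \<noteq> Leaf" by (simp add: Rc_def)
        moreover have "Rc (cs ! i) (ys ! i) \<in> set (map2 Rc cs ys)"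
        proof -
          have "(map2 Rc cs ys) ! i = Rc (cs ! i) (ys ! i)" using i lcs by simp
          moreover have "i < length (map2 Rc cs ys)" using i lcs by simp
          ultimately show ?thesis by (metis nth_mem)
        qed
        ultimately have "norm (map2 Rc cs ys) \<noteq> []" unfolding norm_def filter_empty_conv by blast
        then obtain b rest where "norm (map2 Rc cs ys) = b # rest" by (cases "norm (map2 Rc cs ys)") auto
        then have "norm (Rc c x # map2 Rc cs ys) = Rc c x # b # rest" using Rx by (simp add: norm_def)
        then show ?thesis by (simp add: kappa_long)
      qed
      have "(\<Sum>cs\<in>LS. kappa \<phi> (norm (Rc c x # map2 Rc cs ys)) * \<Phi> (Pc c x @ concat (map2 Pc cs ys)))
          = kappa \<phi> (norm (Rc c x # map2 Rc rep ys)) * \<Phi> (Pc c x @ concat (map2 Pc rep ys))"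
        using finLS repLS zero by (subst sum.remove[OF finLS repLS]) (simp add: sum.neutral)
      also have "norm (Rc c x # map2 Rc rep ys) = [Rc c x]"
      proof -
        have "\<forall>z\<in>set (map2 Rc rep ys). fst z = Leaf"
          by (auto simp: rep_def Rc_def rcut_root set_zip)
        then show ?thesis using Rx by (simp add: norm_def filter_empty_conv)
      qed
      also have "concat (map2 Pc rep ys) = ys"
      proof -
        have "map2 Pc rep ys = map (\<lambda>y. [y]) ys"
          by (rule nth_equalityI) (auto simp: rep_def intro!: Pc_root dys)
        then show ?thesis by simp
      qed
      finally show ?thesis .
    qed
    have "prec (kappa \<phi>) \<Phi> xs = (\<Sum>c\<in>admissible_cuts_plus t. kappa \<phi> [Rc c x] * \<Phi> (Pc c x @ ys))"
      unfolding prec_def Cons list.case LS_def[symmetric] using inner xt by (intro sum.cong) auto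
    also have "\<dots> = (\<Sum>c\<in>admissible_cuts_plus t. kappa \<phi> [Rc c x] * \<Phi> (Pc c x)) * \<Phi> ys"
    proof -
      have "\<Phi> (Pc c x @ ys) = \<Phi> (Pc c x) * \<Phi> ys" if "c \<in> admissible_cuts_plus t" for c
      proof -
        have "c \<subseteq> internal t" using that by (auto simp: admissible_cuts_plus_def admissible_cuts_def)
        then have "basis_ok A (Pc c x)" using basis_ok_Pc[OF dx] xt by simp
        then show ?thesis using assms(2) bys by blast
      qed
      then show ?thesis by (simp add: sum_distrib_right mult.assoc)
    qed
    also have "(\<Sum>c\<in>admissible_cuts_plus t. kappa \<phi> [Rc c x] * \<Phi> (Pc c x)) = phi_ext \<phi> x"
      using tree_identity[OF assms dx] xt by simp
    also have "phi_ext \<phi> x = \<Phi> [x]" using assms(3) dx xt by simp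
    also have "\<Phi> [x] * \<Phi> ys = \<Phi> xs"
    proof -
      have "basis_ok A [x]" using dx xt by (simp add: basis_ok_def)
      then have "\<Phi> ([x] @ ys) = \<Phi> [x] * \<Phi> ys" using assms(2) bys by blast
      then show ?thesis using Cons by simp
    qed
    finally show ?thesis using Cons by (simp add: eps_def)
  qed
qed


end
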